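(* Let $\alpha\in(1,2)$ and let $p\ge2$ be an integer (so $p>\alpha$). Then $f^{p,\alpha}(\theta)=f^{p,\alpha}(-\theta)$ for all $\theta$, and there is a constant $C_{p,\alpha}$ depending only on $p$ and $\alpha$ such that for all $\theta\in[0,\pi]$ $$|\theta|^\alpha\left(\frac{\sin(\theta/2)}{\theta/2}\right)^{p+1}\le f^{p,\alpha}(\theta)\le |\theta|^\alpha\left(\frac{\sin(\theta/2)}{\theta/2}\right)^{p+1}+C_{p,\alpha}\left(\sin(\theta/2)\right)^{p+1}.$$ Moreover, $$\frac{f^{p,\alpha}(\pi)}{\max_\theta f^{p,\alpha}(\theta)}\le\frac{f^{p,\alpha}(\pi)}{f^{p,\alpha}(\pi/2)}\le 2^{\frac{2\alpha+1-p}{2}}.$$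
   Context: For real $\alpha$ and integer $p\ge 2$, $f^{p,\alpha}(\theta)=\sum_{l\in\mathbb Z}|\theta+2l\pi|^{\alpha}\left(\frac{\sin(\theta/2+l\pi)}{\theta/2+l\pi}\right)^{p+1}$ (with the value at $\theta/2+l\pi=0$ of $\frac{\sin x}{x}$ taken as $1$). *)

theory Defs
  imports "HOL-Analysis.Analysis"
begin

definition sinc_fn :: "real \<Rightarrow> real" where
  "sinc_fn x = (if x = 0 then 1 else sin x / x)"

text \<open>f^{p,alpha}(theta) = sum over l in Z of |theta + 2 l pi|^alpha * sinc(theta/2 + l pi)^(p+1).
  The series converges absolutely for p + 1 - alpha > 1; we use the unconditional sum infsum.\<close>
definition f_pa :: "nat \<Rightarrow> real \<Rightarrow> real \<Rightarrow> real" where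
  "f_pa p \<alpha> \<theta> = (\<Sum>\<^sub>\<infinity>l\<in>(UNIV::int set).
      \<bar>\<theta> + 2 * of_int l * pi\<bar> powr \<alpha> * (sinc_fn (\<theta> / 2 + of_int l * pi)) ^ (p + 1))"

end

theory Submission
  imports Defs
begin

definition tt :: "nat \<Rightarrow> real \<Rightarrow> real \<Rightarrow> int \<Rightarrow> real" where
  "tt p \<alpha> \<theta> l = \<bar>\<theta> + 2 * of_int l * pi\<bar> powr \<alpha> * (sinc_fn (\<theta> / 2 + of_int l * pi)) ^ (p + 1)"

lemma f_pa_tt: "f_pa p \<alpha> \<theta> = infsum (tt p \<alpha> \<theta>) UNIV"
  unfolding f_pa_def tt_def ..

lemma key_form:
  fixes y c a :: real assumes "y \<noteq> 0"
  shows "\<bar>y\<bar> powr a * (c / y)^k = (c * sgn y)^k * \<bar>y\<bar> powr (a - real k)"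
proof -
  have "c / y = c * sgn y / \<bar>y\<bar>" using assms
    by (cases "y > 0") (auto simp: field_simps)
  hence "(c / y)^k = (c * sgn y)^k / \<bar>y\<bar> powr real k"
    using assms by (simp add: power_divide powr_realpow)
  thus ?thesis using assms by (simp add: powr_diff field_simps)
qed

lemma tt_form:
  assumes "\<theta> + 2 * of_int l * pi \<noteq> 0"
  shows "tt p \<alpha> \<theta> l = (2 * sin (\<theta> / 2 + of_int l * pi) * sgn (\<theta> + 2 * of_int l * pi))^(p+1)
           * \<bar>\<theta> + 2 * of_int l * pi\<bar> powr (\<alpha> - real (p+1))"
proof -
  define y where "y = \<theta> + 2 * of_int l * pi"
  have h: "\<theta> / 2 + of_int l * pi = y / 2" unfolding y_def by simp
  have "y \<noteq> 0" using assms y_def by simp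
  hence "sinc_fn (y/2) = 2 * sin (y/2) / y" unfolding sinc_fn_def by auto
  hence "tt p \<alpha> \<theta> l = \<bar>y\<bar> powr \<alpha> * (2 * sin (y/2) / y)^(p+1)"
    unfolding tt_def h y_def by simp
  also have "\<dots> = (2 * sin (y/2) * sgn y)^(p+1) * \<bar>y\<bar> powr (\<alpha> - real (p+1))"
    by (rule key_form) fact
  also have "\<dots> = (2 * sin (\<theta> / 2 + of_int l * pi) * sgn (\<theta> + 2 * of_int l * pi))^(p+1)
           * \<bar>\<theta> + 2 * of_int l * pi\<bar> powr (\<alpha> - real (p+1))" unfolding h[symmetric] unfolding y_def by (rule refl)
  finally show ?thesis .
qed

lemma sin_pos_idx: "sin (x + of_int (int n) * pi) = (-1)^n * sin x"
  by (simp add: sin_add)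

lemma sin_neg_idx: "sin (x + of_int (- int n - 1) * pi) = (-1)^(Suc n) * sin x"
proof -
  have "x + of_int (- int n - 1) * pi = x - real (Suc n) * pi" by (simp add: ring_distribs)
  thus ?thesis by (simp only: sin_diff sin_npi cos_npi) simp
qed

lemma sinc_even: "sinc_fn (-x) = sinc_fn x"
  unfolding sinc_fn_def by auto

lemma f_sym: "f_pa p \<alpha> (-\<theta>) = f_pa p \<alpha> \<theta>"
proof -
  have "tt p \<alpha> (-\<theta>) = (\<lambda>l. tt p \<alpha> \<theta> (-l))"
  proof
    fix l
    have "-\<theta>/2 + of_int l * pi = - (\<theta>/2 + of_int (-l) * pi)" by simp
    moreover have "\<bar>-\<theta> + 2 * of_int l * pi\<bar> = \<bar>\<theta> + 2 * of_int (-l) * pi\<bar>" by simp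
    ultimately show "tt p \<alpha> (-\<theta>) l = tt p \<alpha> \<theta> (-l)" unfolding tt_def by (simp only: sinc_even)
  qed
  hence "f_pa p \<alpha> (-\<theta>) = infsum (\<lambda>l. tt p \<alpha> \<theta> (-l)) UNIV" by (simp add: f_pa_tt)
  also have "\<dots> = infsum (tt p \<alpha> \<theta>) (uminus ` UNIV)"
    by (subst infsum_reindex) (auto simp: o_def)
  also have "uminus ` (UNIV::int set) = UNIV" by (metis surj_def minus_minus)
  finally show ?thesis by (simp add: f_pa_tt)
qed

lemma f_per: "f_pa p \<alpha> (\<theta> + 2 * of_int k * pi) = f_pa p \<alpha> \<theta>"
proof -
  have "tt p \<alpha> (\<theta> + 2 * of_int k * pi) = (\<lambda>l. tt p \<alpha> \<theta> (l + k))"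
  proof
    fix l
    have a: "(\<theta> + 2 * of_int k * pi)/2 + of_int l * pi = \<theta>/2 + of_int (l+k) * pi" by (simp add: algebra_simps)
    have b: "\<theta> + 2 * of_int k * pi + 2 * of_int l * pi = \<theta> + 2 * of_int (l+k) * pi" by (simp add: algebra_simps)
    show "tt p \<alpha> (\<theta> + 2 * of_int k * pi) l = tt p \<alpha> \<theta> (l + k)" unfolding tt_def a b ..
  qed
  hence "f_pa p \<alpha> (\<theta> + 2 * of_int k * pi) = infsum (\<lambda>l. tt p \<alpha> \<theta> (l + k)) UNIV" by (simp add: f_pa_tt)
  also have "\<dots> = infsum (tt p \<alpha> \<theta>) ((\<lambda>l. l + k) ` UNIV)"
    by (subst infsum_reindex) (auto simp: o_def)
  also have "(\<lambda>l. l + k) ` (UNIV::int set) = UNIV" by (metis surj_def diff_add_cancel)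
  finally show ?thesis by (simp add: f_pa_tt)
qed

lemma int_split:
  fixes g :: "int \<Rightarrow> real"
  assumes "summable (\<lambda>n. norm (g (int n)))" "summable (\<lambda>n. norm (g (- int n - 1)))"
  shows "infsum g UNIV = (\<Sum>n. g (int n)) + (\<Sum>n. g (- int n - 1))"
proof -
  have "(\<lambda>n. g (int n)) sums (\<Sum>n. g (int n))"
    using summable_norm_cancel[OF assms(1)] by (simp add: summable_sums)
  hence s1: "((g \<circ> int) has_sum (\<Sum>n. g (int n))) UNIV"
    using norm_summable_imp_has_sum[OF assms(1)] by (simp add: o_def)
  have "(\<lambda>n. g (- int n - 1)) sums (\<Sum>n. g (- int n - 1))"
    using summable_norm_cancel[OF assms(2)] by (simp add: summable_sums)
  hence s2: "((g \<circ> (\<lambda>n. - int n - 1)) has_sum (\<Sum>n. g (- int n - 1))) UNIV"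
    using norm_summable_imp_has_sum[OF assms(2)] by (simp add: o_def)
  have i1: "inj int" by (simp add: inj_on_def)
  have i2: "inj (\<lambda>n::nat. - int n - 1)" by (simp add: inj_on_def)
  have h1: "(g has_sum (\<Sum>n. g (int n))) (range int)"
    by (subst has_sum_reindex[OF i1]) (rule s1)
  have h2: "(g has_sum (\<Sum>n. g (- int n - 1))) (range (\<lambda>n::nat. - int n - 1))"
    by (subst has_sum_reindex[OF i2]) (rule s2)
  have d: "range int \<inter> range (\<lambda>n::nat. - int n - 1) = {}" by auto
  have u: "range int \<union> range (\<lambda>n::nat. - int n - 1) = UNIV"
  proof -
    have "x \<in> range int \<union> range (\<lambda>n::nat. - int n - 1)" for x :: int
    proof (cases "x \<ge> 0")
      case True
      hence "x = int (nat x)" by simp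
      thus ?thesis by blast
    next
      case False
      hence "x = - int (nat (-x-1)) - 1" by simp
      thus ?thesis by blast
    qed
    thus ?thesis by auto
  qed
  have "(g has_sum ((\<Sum>n. g (int n)) + (\<Sum>n. g (- int n - 1)))) UNIV"
    using has_sum_Un_disjoint[OF h1 h2 d] u by simp
  thus ?thesis by (rule infsumI)
qed


lemma h_anti:
  fixes b \<theta> x x' :: real
  assumes "b \<le> 0" "0 \<le> \<theta>" "\<theta> < x" "x \<le> x'"
  shows "(x' - \<theta>) powr b - (x' + \<theta>) powr b \<le> (x - \<theta>) powr b - (x + \<theta>) powr b"
proof (rule DERIV_nonpos_imp_nonincreasing[where f = "\<lambda>z. (z - \<theta>) powr b - (z + \<theta>) powr b"])
  show "x \<le> x'" by fact
  fix z assume z: "x \<le> z" "z \<le> x'"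
  hence zp: "z - \<theta> > 0" "z + \<theta> > 0" using assms by auto
  have d: "((\<lambda>z. (z - \<theta>) powr b - (z + \<theta>) powr b) has_real_derivative
      (b * (z - \<theta>) powr (b - 1) - b * (z + \<theta>) powr (b - 1))) (at z)"
    using zp by (auto intro!: derivative_eq_intros)
  have "(z + \<theta>) powr (b - 1) \<le> (z - \<theta>) powr (b - 1)"
    using zp assms by (intro powr_mono2') auto
  hence "b * (z - \<theta>) powr (b - 1) - b * (z + \<theta>) powr (b - 1) \<le> 0"
    using assms(1) by (simp add: right_diff_distrib[symmetric] mult_nonpos_nonneg)
  thus "\<exists>y. ((\<lambda>z. (z - \<theta>) powr b - (z + \<theta>) powr b) has_real_derivative y) (at z) \<and> y \<le> 0"
    using d by blast
qed

lemma neg1_pow: "((-1::real)^n * x)^k = ((-1)^k)^n * x^k"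
  by (simp add: power_mult_distrib power_mult[symmetric] mult.commute)

lemma tt_pos_val:
  assumes "\<theta> + 2 * real n * pi > 0"
  shows "tt p \<alpha> \<theta> (int n) = ((-1)^n * (2 * sin (\<theta>/2)))^(p+1) * (\<theta> + 2 * real n * pi) powr (\<alpha> - real (p+1))"
proof -
  have "tt p \<alpha> \<theta> (int n) = (2 * sin (\<theta> / 2 + of_int (int n) * pi) * sgn (\<theta> + 2 * of_int (int n) * pi))^(p+1)
           * \<bar>\<theta> + 2 * of_int (int n) * pi\<bar> powr (\<alpha> - real (p+1))"
    using assms by (intro tt_form) simp
  also have "\<dots> = ((-1)^n * (2 * sin (\<theta>/2)))^(p+1) * (\<theta> + 2 * real n * pi) powr (\<alpha> - real (p+1))"
    using assms by (simp only: sin_pos_idx) (simp add: mult_ac)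
  finally show ?thesis .
qed

lemma tt_neg_val:
  assumes "\<theta> - 2 * real (Suc n) * pi < 0"
  shows "tt p \<alpha> \<theta> (- int n - 1) = ((-1)^n * (2 * sin (\<theta>/2)))^(p+1) * (2 * real (Suc n) * pi - \<theta>) powr (\<alpha> - real (p+1))"
proof -
  have e: "\<theta> + 2 * of_int (- int n - 1) * pi = \<theta> - 2 * real (Suc n) * pi" by (simp add: algebra_simps)
  have "tt p \<alpha> \<theta> (- int n - 1) = (2 * sin (\<theta> / 2 + of_int (- int n - 1) * pi) * sgn (\<theta> + 2 * of_int (- int n - 1) * pi))^(p+1)
           * \<bar>\<theta> + 2 * of_int (- int n - 1) * pi\<bar> powr (\<alpha> - real (p+1))"
    using assms e by (intro tt_form) simp
  also have "\<dots> = ((-1)^n * (2 * sin (\<theta>/2)))^(p+1) * (2 * real (Suc n) * pi - \<theta>) powr (\<alpha> - real (p+1))"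
    using assms unfolding e by (simp only: sin_neg_idx) (simp add: mult_ac)
  finally show ?thesis .
qed


lemma summ_powr: "b < -1 \<Longrightarrow> summable (\<lambda>n. real (Suc n) powr b)"
  using summable_Suc_iff[where f = "\<lambda>n. real n powr b"] summable_real_powr_iff by auto

lemma Npi1: fixes N :: real assumes "1 \<le> N" shows "N \<le> 2 * N * pi"
proof -
  have "N * 1 \<le> N * pi" using assms pi_gt3 by (intro mult_left_mono) auto
  thus ?thesis using assms by (simp add: mult.assoc)
qed

lemma Npi2: fixes N :: real assumes "1 \<le> N" "\<theta> \<le> pi" shows "N \<le> 2 * N * pi - \<theta>"
proof -
  have a: "N * 1 \<le> N * pi" using assms pi_gt3 by (intro mult_left_mono) auto
  have b: "1 * pi \<le> N * pi" using assms pi_gt3 by (intro mult_right_mono) auto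
  have "2 * N * pi = N * pi + N * pi" by simp
  thus ?thesis using a b assms by linarith
qed

context
  fixes p :: nat and \<alpha> :: real
  assumes a0: "0 < \<alpha>" and ap: "\<alpha> < real p"
begin

abbreviation "\<beta> \<equiv> \<alpha> - real (p+1)"

lemma beta_lt: "\<beta> < -1" using ap by simp

lemma bnd_pos:
  assumes "0 \<le> \<theta>" "\<theta> \<le> pi"
  shows "\<bar>tt p \<alpha> \<theta> (int (Suc n))\<bar> \<le> (2 * sin (\<theta>/2))^(p+1) * real (Suc n) powr \<beta>"
proof -
  have s: "0 \<le> sin (\<theta>/2)" using assms by (intro sin_ge_zero) auto
  have "0 < 2 * real (Suc n) * pi" by simp
  hence y: "\<theta> + 2 * real (Suc n) * pi > 0" using assms by linarith
  have "\<bar>tt p \<alpha> \<theta> (int (Suc n))\<bar> = (2 * sin (\<theta>/2))^(p+1) * (\<theta> + 2 * real (Suc n) * pi) powr \<beta>"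
    using tt_pos_val[OF y] s by (simp add: abs_mult power_abs)
  also have "\<dots> \<le> (2 * sin (\<theta>/2))^(p+1) * real (Suc n) powr \<beta>"
  proof (rule mult_left_mono)
    have "real (Suc n) \<le> 2 * real (Suc n) * pi" by (rule Npi1) simp
    hence "real (Suc n) \<le> \<theta> + 2 * real (Suc n) * pi" using assms by linarith
    thus "(\<theta> + 2 * real (Suc n) * pi) powr \<beta> \<le> real (Suc n) powr \<beta>"
      using ap by (intro powr_mono2') auto
  qed (use s in simp)
  finally show ?thesis .
qed

lemma bnd_neg:
  assumes "0 \<le> \<theta>" "\<theta> \<le> pi"
  shows "\<bar>tt p \<alpha> \<theta> (- int n - 1)\<bar> \<le> (2 * sin (\<theta>/2))^(p+1) * real (Suc n) powr \<beta>"
proof -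
  have s: "0 \<le> sin (\<theta>/2)" using assms by (intro sin_ge_zero) auto
  have k: "real (Suc n) \<le> 2 * real (Suc n) * pi - \<theta>"
    by (rule Npi2) (use assms in auto)
  have y: "\<theta> - 2 * real (Suc n) * pi < 0" using k by simp
  have "\<bar>tt p \<alpha> \<theta> (- int n - 1)\<bar> = (2 * sin (\<theta>/2))^(p+1) * (2 * real (Suc n) * pi - \<theta>) powr \<beta>"
    using tt_neg_val[OF y] s by (simp add: abs_mult power_abs)
  also have "\<dots> \<le> (2 * sin (\<theta>/2))^(p+1) * real (Suc n) powr \<beta>"
  proof (rule mult_left_mono)
    show "(2 * real (Suc n) * pi - \<theta>) powr \<beta> \<le> real (Suc n) powr \<beta>"
      using ap k by (intro powr_mono2') auto
  qed (use s in simp)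
  finally show ?thesis .
qed

lemma summ_parts:
  assumes "0 \<le> \<theta>" "\<theta> \<le> pi"
  shows "summable (\<lambda>n. norm (tt p \<alpha> \<theta> (int (Suc n))))"
    "summable (\<lambda>n. norm (tt p \<alpha> \<theta> (int n)))"
    "summable (\<lambda>n. norm (tt p \<alpha> \<theta> (- int n - 1)))"
proof -
  have S: "summable (\<lambda>n. (2 * sin (\<theta>/2))^(p+1) * real (Suc n) powr \<beta>)"
    using summ_powr[OF beta_lt] by (rule summable_mult)
  show A: "summable (\<lambda>n. norm (tt p \<alpha> \<theta> (int (Suc n))))"
    by (rule summable_comparison_test[OF _ S]) (use bnd_pos[OF assms] in simp)
  show "summable (\<lambda>n. norm (tt p \<alpha> \<theta> (int n)))"
    using summable_Suc_iff[where f = "\<lambda>n. norm (tt p \<alpha> \<theta> (int n))"] A by simp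
  show "summable (\<lambda>n. norm (tt p \<alpha> \<theta> (- int n - 1)))"
    by (rule summable_comparison_test[OF _ S]) (use bnd_neg[OF assms] in simp)
qed

lemma f_decomp:
  assumes "0 \<le> \<theta>" "\<theta> \<le> pi"
  shows "f_pa p \<alpha> \<theta> = \<bar>\<theta>\<bar> powr \<alpha> * sinc_fn (\<theta> / 2) ^ (p + 1)
     + (\<Sum>n. tt p \<alpha> \<theta> (int (Suc n))) + (\<Sum>n. tt p \<alpha> \<theta> (- int n - 1))"
proof -
  note S = summ_parts[OF assms]
  have s0: "summable (\<lambda>n. tt p \<alpha> \<theta> (int n))" by (rule summable_norm_cancel[OF S(2)])
  have "f_pa p \<alpha> \<theta> = (\<Sum>n. tt p \<alpha> \<theta> (int n)) + (\<Sum>n. tt p \<alpha> \<theta> (- int n - 1))"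
    unfolding f_pa_tt by (rule int_split[OF S(2,3)])
  also have "(\<Sum>n. tt p \<alpha> \<theta> (int n)) = tt p \<alpha> \<theta> (int 0) + (\<Sum>n. tt p \<alpha> \<theta> (int (Suc n)))"
    using suminf_split_head[OF s0] by linarith
  also have "tt p \<alpha> \<theta> (int 0) = \<bar>\<theta>\<bar> powr \<alpha> * sinc_fn (\<theta> / 2) ^ (p + 1)"
    unfolding tt_def by (simp only: of_nat_0 of_int_0 mult_zero_right mult_zero_left add_0_right)
  finally show ?thesis by linarith
qed


definition Zc :: real where "Zc = (\<Sum>n. real (Suc n) powr \<beta>)"

lemma f_upper:
  assumes "0 \<le> \<theta>" "\<theta> \<le> pi"
  shows "f_pa p \<alpha> \<theta> \<le> \<bar>\<theta>\<bar> powr \<alpha> * sinc_fn (\<theta> / 2) ^ (p + 1) + (2 * 2^(p+1) * Zc) * sin (\<theta>/2) ^ (p+1)"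
proof -
  note S = summ_parts[OF assms]
  have Zs: "summable (\<lambda>n. real (Suc n) powr \<beta>)" by (rule summ_powr[OF beta_lt])
  have R: "summable (\<lambda>n. (2 * sin (\<theta>/2))^(p+1) * real (Suc n) powr \<beta>)"
    using Zs by (rule summable_mult)
  have RS: "(\<Sum>n. (2 * sin (\<theta>/2))^(p+1) * real (Suc n) powr \<beta>) = 2^(p+1) * sin (\<theta>/2) ^ (p+1) * Zc"
    unfolding Zc_def suminf_mult[OF Zs] by (simp add: power_mult_distrib)
  have 1: "(\<Sum>n. tt p \<alpha> \<theta> (int (Suc n))) \<le> (\<Sum>n. (2 * sin (\<theta>/2))^(p+1) * real (Suc n) powr \<beta>)"
  proof (rule suminf_le)
    fix n show "tt p \<alpha> \<theta> (int (Suc n)) \<le> (2 * sin (\<theta>/2))^(p+1) * real (Suc n) powr \<beta>"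
      using bnd_pos[OF assms, of n] by linarith
  qed (rule summable_norm_cancel[OF S(1)], rule R)
  have 2: "(\<Sum>n. tt p \<alpha> \<theta> (- int n - 1)) \<le> (\<Sum>n. (2 * sin (\<theta>/2))^(p+1) * real (Suc n) powr \<beta>)"
  proof (rule suminf_le)
    fix n show "tt p \<alpha> \<theta> (- int n - 1) \<le> (2 * sin (\<theta>/2))^(p+1) * real (Suc n) powr \<beta>"
      using bnd_neg[OF assms, of n] by linarith
  qed (rule summable_norm_cancel[OF S(3)], rule R)
  show ?thesis using f_decomp[OF assms] 1 2 RS by (simp add: algebra_simps)
qed

lemma f_lower:
  assumes "0 \<le> \<theta>" "\<theta> \<le> pi"
  shows "\<bar>\<theta>\<bar> powr \<alpha> * sinc_fn (\<theta> / 2) ^ (p + 1) \<le> f_pa p \<alpha> \<theta>"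
proof -
  note S = summ_parts[OF assms]
  have s1: "summable (\<lambda>n. tt p \<alpha> \<theta> (int (Suc n)))" by (rule summable_norm_cancel[OF S(1)])
  have s2: "summable (\<lambda>n. tt p \<alpha> \<theta> (- int n - 1))" by (rule summable_norm_cancel[OF S(3)])
  have "0 \<le> (\<Sum>n. tt p \<alpha> \<theta> (int (Suc n))) + (\<Sum>n. tt p \<alpha> \<theta> (- int n - 1))"
  proof (cases "even p")
    case False
    hence ev: "even (p+1)" by simp
    have nn: "0 \<le> tt p \<alpha> \<theta> l" for l
      unfolding tt_def by (intro mult_nonneg_nonneg zero_le_even_power[OF ev]) simp
    show ?thesis using suminf_nonneg[OF s1 nn] suminf_nonneg[OF s2 nn] by linarith
  next
    case True
    hence m1: "(-1::real)^(p+1) = -1" by simp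
    define K where "K = (2 * sin (\<theta>/2))^(p+1)"
    have K0: "0 \<le> K" unfolding K_def using assms by (intro zero_le_power) (auto intro: sin_ge_zero)
    define g where "g n = (2 * real (Suc n) * pi - \<theta>) powr \<beta> - (2 * real (Suc n) * pi + \<theta>) powr \<beta>" for n
    define P where "P n = tt p \<alpha> \<theta> (int (Suc n)) + tt p \<alpha> \<theta> (- int n - 1)" for n
    have Pf: "P n = K * ((-1)^n * g n)" for n
    proof -
      have y1: "\<theta> + 2 * real (Suc n) * pi > 0"
        using Npi1[of "real (Suc n)"] assms by simp
      have y2: "\<theta> - 2 * real (Suc n) * pi < 0"
        using Npi2[of "real (Suc n)" \<theta>] assms by simp
      have c: "\<theta> + 2 * real (Suc n) * pi = 2 * real (Suc n) * pi + \<theta>" by simp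
      show ?thesis
        unfolding P_def tt_pos_val[OF y1] tt_neg_val[OF y2] neg1_pow m1 g_def K_def c
        by (simp add: algebra_simps)
    qed
    have sP: "summable P" unfolding P_def using s1 s2 by (rule summable_add)
    have grp: "(\<lambda>j. sum P {j*2..<j*2+2}) sums (suminf P)"
      using sums_group[OF summable_sums[OF sP], of 2] by simp
    have "0 \<le> sum P {j*2..<j*2+2}" for j
    proof -
      have e: "sum P {j*2..<j*2+2} = P (2*j) + P (Suc (2*j))"
        by (simp add: eval_nat_numeral mult.commute)
      have "g (Suc (2*j)) \<le> g (2*j)"
      proof -
        have "2 * real (Suc (2*j)) * pi \<ge> 2 * pi" by simp
        hence "\<theta> < 2 * real (Suc (2*j)) * pi" using assms pi_gt_zero by linarith
        thus ?thesis unfolding g_def using ap assms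
          by (intro h_anti) auto
      qed
      thus ?thesis unfolding e Pf using K0 by (simp add: algebra_simps mult_left_mono)
    qed
    hence "0 \<le> suminf P" using sums_le[OF _ sums_zero grp] by blast
    thus ?thesis unfolding suminf_add[OF s1 s2] P_def .
  qed
  thus ?thesis using f_decomp[OF assms] by linarith
qed

lemma summ_lin:
  assumes "\<bar>s\<bar> \<le> 1" "1 \<le> c" "1 \<le> d"
  shows "summable (\<lambda>n. s^n * real (c*n+d) powr \<beta>)"
proof (rule summable_comparison_test[OF _ summ_powr[OF beta_lt]])
  show "\<exists>N. \<forall>n\<ge>N. norm (s^n * real (c*n+d) powr \<beta>) \<le> real (Suc n) powr \<beta>"
  proof (intro exI allI impI)
    fix n :: nat
    have "n \<le> c * n" using assms by simp
    hence le: "real (Suc n) \<le> real (c*n+d)" using assms by linarith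
    have "norm (s^n * real (c*n+d) powr \<beta>) = \<bar>s\<bar>^n * real (c*n+d) powr \<beta>"
      by (simp add: abs_mult power_abs)
    also have "\<dots> \<le> 1 * real (c*n+d) powr \<beta>"
      using assms by (intro mult_right_mono power_le_one) auto
    also have "\<dots> \<le> real (Suc n) powr \<beta>"
      using le ap by (simp add: powr_mono2')
    finally show "norm (s^n * real (c*n+d) powr \<beta>) \<le> real (Suc n) powr \<beta>" .
  qed
qed

abbreviation "\<sigma> \<equiv> (-1::real)^(p+1)"

lemma sig_abs: "\<bar>\<sigma>\<bar> \<le> 1" by (simp add: power_abs)

lemma f_pi: "f_pa p \<alpha> pi = 2 * 2^(p+1) * pi powr \<beta> * (\<Sum>n. \<sigma>^n * real (2*n+1) powr \<beta>)"
proof -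
  note S = summ_parts[of pi]
  define c where "c = 2^(p+1) * pi powr \<beta>"
  have A: "tt p \<alpha> pi (int n) = c * (\<sigma>^n * real (2*n+1) powr \<beta>)" for n
  proof -
    have y: "pi + 2 * real n * pi > 0" by (simp add: add_pos_nonneg)
    have e: "pi + 2 * real n * pi = pi * real (2*n+1)" by (simp add: algebra_simps)
    show ?thesis unfolding tt_pos_val[OF y] e powr_mult neg1_pow c_def by simp
  qed
  have B: "tt p \<alpha> pi (- int n - 1) = c * (\<sigma>^n * real (2*n+1) powr \<beta>)" for n
  proof -
    have e: "2 * real (Suc n) * pi - pi = pi * real (2*n+1)" by (simp add: algebra_simps)
    have "pi * real (2*n+1) > 0" by simp
    hence y: "pi - 2 * real (Suc n) * pi < 0" using e by linarith
    show ?thesis unfolding tt_neg_val[OF y] e powr_mult neg1_pow c_def by simp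
  qed
  have w: "summable (\<lambda>n. \<sigma>^n * real (2*n+1) powr \<beta>)" by (rule summ_lin[OF sig_abs]) auto
  have "f_pa p \<alpha> pi = (\<Sum>n. tt p \<alpha> pi (int n)) + (\<Sum>n. tt p \<alpha> pi (- int n - 1))"
    unfolding f_pa_tt by (rule int_split[OF S(2,3)]) simp_all
  also have "\<dots> = 2 * c * (\<Sum>n. \<sigma>^n * real (2*n+1) powr \<beta>)"
    unfolding A B suminf_mult[OF w] by simp
  finally show ?thesis unfolding c_def by simp
qed

lemma f_pi2: "f_pa p \<alpha> (pi/2) = sqrt 2^(p+1) * (pi/2) powr \<beta> *
   (\<Sum>n. \<sigma>^n * (real (4*n+1) powr \<beta> + real (4*n+3) powr \<beta>))"
proof -
  note S = summ_parts[of "pi/2"]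
  define c where "c = sqrt 2^(p+1) * (pi/2) powr \<beta>"
  have sn: "2 * sin (pi/2/2) = sqrt 2" using sin_45 by simp
  have A: "tt p \<alpha> (pi/2) (int n) = c * (\<sigma>^n * real (4*n+1) powr \<beta>)" for n
  proof -
    have y: "pi/2 + 2 * real n * pi > 0" by (simp add: add_pos_nonneg)
    have e: "pi/2 + 2 * real n * pi = (pi/2) * real (4*n+1)" by (simp add: algebra_simps)
    show ?thesis unfolding tt_pos_val[OF y] e powr_mult neg1_pow c_def sn by simp
  qed
  have B: "tt p \<alpha> (pi/2) (- int n - 1) = c * (\<sigma>^n * real (4*n+3) powr \<beta>)" for n
  proof -
    have e: "2 * real (Suc n) * pi - pi/2 = (pi/2) * real (4*n+3)" by (simp add: algebra_simps)
    have "(pi/2) * real (4*n+3) > 0" by simp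
    hence y: "pi/2 - 2 * real (Suc n) * pi < 0" using e by linarith
    show ?thesis unfolding tt_neg_val[OF y] e powr_mult neg1_pow c_def sn by simp
  qed
  have w1: "summable (\<lambda>n. \<sigma>^n * real (4*n+1) powr \<beta>)" by (rule summ_lin[OF sig_abs]) auto
  have w3: "summable (\<lambda>n. \<sigma>^n * real (4*n+3) powr \<beta>)" by (rule summ_lin[OF sig_abs]) auto
  have "f_pa p \<alpha> (pi/2) = (\<Sum>n. tt p \<alpha> (pi/2) (int n)) + (\<Sum>n. tt p \<alpha> (pi/2) (- int n - 1))"
    unfolding f_pa_tt by (rule int_split[OF S(2,3)]) simp_all
  also have "\<dots> = c * ((\<Sum>n. \<sigma>^n * real (4*n+1) powr \<beta>) + (\<Sum>n. \<sigma>^n * real (4*n+3) powr \<beta>))"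
    unfolding A B suminf_mult[OF w1] suminf_mult[OF w3] by (simp add: algebra_simps)
  also have "(\<Sum>n. \<sigma>^n * real (4*n+1) powr \<beta>) + (\<Sum>n. \<sigma>^n * real (4*n+3) powr \<beta>)
     = (\<Sum>n. \<sigma>^n * (real (4*n+1) powr \<beta> + real (4*n+3) powr \<beta>))"
    unfolding suminf_add[OF w1 w3] by (simp add: algebra_simps)
  finally show ?thesis unfolding c_def by simp
qed

lemma S_cmp:
  shows "0 < (\<Sum>n. \<sigma>^n * real (2*n+1) powr \<beta>)"
    "(\<Sum>n. \<sigma>^n * real (2*n+1) powr \<beta>) \<le> (\<Sum>n. \<sigma>^n * (real (4*n+1) powr \<beta> + real (4*n+3) powr \<beta>))"
proof -
  define u where "u m = real m powr \<beta>" for m :: nat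
  define F where "F n = \<sigma>^n * u (2*n+1)" for n
  define G where "G n = \<sigma>^n * (u (4*n+1) + u (4*n+3))" for n
  have e1: "(\<Sum>n. \<sigma>^n * real (2*n+1) powr \<beta>) = suminf F" unfolding F_def u_def ..
  have e2: "(\<Sum>n. \<sigma>^n * (real (4*n+1) powr \<beta> + real (4*n+3) powr \<beta>)) = suminf G" unfolding G_def u_def ..
  have wF: "summable F" unfolding F_def u_def by (rule summ_lin[OF sig_abs]) auto
  have w1: "summable (\<lambda>n. \<sigma>^n * u (4*n+1))" unfolding u_def by (rule summ_lin[OF sig_abs]) auto
  have w3: "summable (\<lambda>n. \<sigma>^n * u (4*n+3))" unfolding u_def by (rule summ_lin[OF sig_abs]) auto
  have wG: "summable G" unfolding G_def distrib_left using w1 w3 by (rule summable_add)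
  have s2: "\<sigma>^(2*j) = 1" for j by (simp add: power_mult[symmetric])
  have grpF: "(\<lambda>j. u (4*j+1) + \<sigma> * u (4*j+3)) sums suminf F"
  proof -
    have "(\<lambda>j. sum F {j*2..<j*2+2}) sums suminf F"
      using sums_group[OF summable_sums[OF wF], of 2] by simp
    moreover have "sum F {j*2..<j*2+2} = u (4*j+1) + \<sigma> * u (4*j+3)" for j
    proof -
      have "sum F {j*2..<j*2+2} = F (2*j) + F (Suc (2*j))"
        by (simp add: eval_nat_numeral mult.commute)
      also have "\<dots> = u (4*j+1) + \<sigma> * u (4*j+3)"
      proof -
        have i1: "2 * (2*j) + 1 = 4*j+1" "2 * Suc (2*j) + 1 = 4*j+3" by simp_all
        have "\<sigma>^(Suc (2*j)) = \<sigma>" using s2[of j] by simp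
        thus ?thesis unfolding F_def i1 using s2[of j] by simp
      qed
      finally show ?thesis .
    qed
    ultimately show ?thesis by simp
  qed
  have upos: "0 < u m" if "m > 0" for m unfolding u_def using that by simp
  have udec: "u m' < u m" if "0 < m" "m < m'" for m m'
    unfolding u_def using that beta_lt by (intro powr_less_mono2_neg) auto
  have "0 < suminf F \<and> suminf F \<le> suminf G"
  proof (cases "even p")
    case False
    hence sg: "\<sigma> = 1" by simp
    have sgp: "(-1::real)^p = -1" using False by simp
    have G: "G = (\<lambda>j. u (4*j+1) + \<sigma> * u (4*j+3))" unfolding G_def sg by simp
    have "suminf F = suminf G" using grpF unfolding G by (simp add: sums_iff)
    moreover have "0 < suminf G"
      using wG by (rule suminf_pos) (simp add: G_def sgp upos add_pos_pos)
    ultimately show ?thesis by simp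
  next
    case True
    hence sg: "\<sigma> = -1" by simp
    have sgp: "(-1::real)^p = 1" using True by simp
    have "0 < suminf F"
    proof -
      have "0 < (\<Sum>j. u (4*j+1) + \<sigma> * u (4*j+3))"
        using grpF[THEN sums_summable] by (rule suminf_pos) (simp add: sgp udec)
      thus ?thesis using grpF by (simp add: sums_iff)
    qed
    moreover have "suminf F \<le> suminf G"
    proof -
      define D where "D j = G j - (u (4*j+1) + \<sigma> * u (4*j+3))" for j
      have Ds: "D sums (suminf G - suminf F)" unfolding D_def
        using sums_diff[OF summable_sums[OF wG] grpF] .
      have grpD: "(\<lambda>i. sum D {i*2..<i*2+2}) sums (suminf G - suminf F)"
        using sums_group[OF Ds, of 2] by simp
      have nn: "0 \<le> sum D {i*2..<i*2+2}" for i
      proof -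
        have "sum D {i*2..<i*2+2} = D (2*i) + D (Suc (2*i))"
          by (simp add: eval_nat_numeral mult.commute)
        also have "\<dots> = 2 * u (8*i+3) - 2 * u (8*i+5)"
        proof -
          have i: "4*(2*i)+1 = 8*i+1" "4*(2*i)+3 = 8*i+3" "4*Suc(2*i)+1 = 8*i+5" "4*Suc(2*i)+3 = 8*i+7"
            by simp_all
          have p1: "(-1::real)^(2*i) = 1" "(-1::real)^(Suc(2*i)) = -1" by simp_all
          show ?thesis unfolding D_def G_def sg i p1 by simp
        qed
        also have "\<dots> \<ge> 0"
        proof -
          have "u (8*i+5) < u (8*i+3)" by (rule udec) simp_all
          thus ?thesis by linarith
        qed
        finally show ?thesis .
      qed
      have "(0::real) \<le> suminf G - suminf F" by (rule sums_le[OF nn sums_zero grpD])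
      thus ?thesis by simp
    qed
    ultimately show ?thesis by simp
  qed
  thus "0 < (\<Sum>n. \<sigma>^n * real (2*n+1) powr \<beta>)"
    "(\<Sum>n. \<sigma>^n * real (2*n+1) powr \<beta>) \<le> (\<Sum>n. \<sigma>^n * (real (4*n+1) powr \<beta> + real (4*n+3) powr \<beta>))"
    unfolding e1 e2 by auto
qed

lemma K_eq: "2 * 2^(p+1) * pi powr \<beta> = 2 powr ((2*\<alpha>+1-real p)/2) * (sqrt 2^(p+1) * (pi/2) powr \<beta>)"
proof -
  define e where "e = (2*\<alpha>+1-real p)/2"
  have a: "2 * 2^(p+1) = (2::real) powr (real p + 2)"
    using powr_realpow[of 2 "p+2"] by (simp add: add.commute)
  have b: "sqrt 2^(p+1) = (2::real) powr (real (p+1) / 2)"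
  proof -
    have "sqrt 2^(p+1) = ((2::real) powr (1/2))^(p+1)" by (simp add: powr_half_sqrt)
    also have "\<dots> = 2 powr (real (p+1) * (1/2))" by (rule powr_power) simp
    finally show ?thesis by simp
  qed
  have c: "(pi/2) powr \<beta> = pi powr \<beta> / 2 powr \<beta>" by (rule powr_divide)
  have d: "(2::real) powr e * 2 powr (real (p+1) / 2) / 2 powr \<beta> = 2 powr (e + real (p+1) / 2 - \<beta>)"
    by (simp add: powr_add powr_diff)
  have ex: "e + real (p+1) / 2 - \<beta> = real p + 2" unfolding e_def by (simp add: field_simps)
  have "2 powr e * (sqrt 2^(p+1) * (pi/2) powr \<beta>) = pi powr \<beta> * ((2::real) powr e * 2 powr (real (p+1) / 2) / 2 powr \<beta>)"
    unfolding b c by simp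
  also have "\<dots> = 2 * 2^(p+1) * pi powr \<beta>" unfolding d ex a by simp
  finally show ?thesis unfolding e_def by simp
qed

lemma ratio:
  shows "0 < f_pa p \<alpha> (pi/2)" "0 \<le> f_pa p \<alpha> pi"
    "f_pa p \<alpha> pi / f_pa p \<alpha> (pi/2) \<le> 2 powr ((2*\<alpha>+1-real p)/2)"
proof -
  define S1 where "S1 = (\<Sum>n. \<sigma>^n * real (2*n+1) powr \<beta>)"
  define S2 where "S2 = (\<Sum>n. \<sigma>^n * (real (4*n+1) powr \<beta> + real (4*n+3) powr \<beta>))"
  define K2 where "K2 = sqrt 2^(p+1) * (pi/2) powr \<beta>"
  define E where "E = (2::real) powr ((2*\<alpha>+1-real p)/2)"
  have S: "0 < S1" "S1 \<le> S2" using S_cmp unfolding S1_def S2_def by auto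
  have K2: "0 < K2" unfolding K2_def by simp
  have E: "0 < E" unfolding E_def by simp
  have fp: "f_pa p \<alpha> pi = E * K2 * S1" using f_pi K_eq unfolding S1_def K2_def E_def by simp
  have fp2: "f_pa p \<alpha> (pi/2) = K2 * S2" using f_pi2 unfolding S2_def K2_def by simp
  show "0 < f_pa p \<alpha> (pi/2)" unfolding fp2 using K2 S by simp
  show "0 \<le> f_pa p \<alpha> pi" unfolding fp using K2 S E by simp
  have "f_pa p \<alpha> pi / f_pa p \<alpha> (pi/2) = E * (S1 / S2)" unfolding fp fp2 using K2 by simp
  also have "\<dots> \<le> E * 1"
    using S E by (intro mult_left_mono) (auto simp: divide_le_eq_1)
  finally show "f_pa p \<alpha> pi / f_pa p \<alpha> (pi/2) \<le> 2 powr ((2*\<alpha>+1-real p)/2)" unfolding E_def by simp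
qed

lemma sinc_le1: "\<bar>sinc_fn y\<bar> \<le> 1"
  unfolding sinc_fn_def using abs_sin_x_le_abs_x[of y]
  by (auto simp: abs_divide divide_le_eq_1)

lemma bounds_ex: "\<exists>C. \<forall>\<theta>\<in>{0..pi}.
          \<bar>\<theta>\<bar> powr \<alpha> * sinc_fn (\<theta> / 2) ^ (p + 1) \<le> f_pa p \<alpha> \<theta>
        \<and> f_pa p \<alpha> \<theta> \<le> \<bar>\<theta>\<bar> powr \<alpha> * sinc_fn (\<theta> / 2) ^ (p + 1)
                          + C * (sin (\<theta> / 2)) ^ (p + 1)"
proof (intro exI ballI conjI)
  fix \<theta> :: real assume t: "\<theta> \<in> {0..pi}"
  show "\<bar>\<theta>\<bar> powr \<alpha> * sinc_fn (\<theta> / 2) ^ (p + 1) \<le> f_pa p \<alpha> \<theta>" using f_lower t by auto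
  show "f_pa p \<alpha> \<theta> \<le> \<bar>\<theta>\<bar> powr \<alpha> * sinc_fn (\<theta> / 2) ^ (p + 1)
                          + (2 * 2^(p+1) * Zc) * (sin (\<theta> / 2)) ^ (p + 1)" using f_upper t by auto
qed

lemma reduce: "\<exists>\<theta>0\<in>{0..pi}. f_pa p \<alpha> x = f_pa p \<alpha> \<theta>0"
proof -
  define k where "k = \<lfloor>x / (2*pi)\<rfloor>"
  define r where "r = x - 2 * of_int k * pi"
  have l: "of_int k * (2*pi) \<le> x" unfolding k_def by (rule floor_divide_lower) simp
  have u: "x < (of_int k + 1) * (2*pi)" unfolding k_def by (rule floor_divide_upper) simp
  have r0: "0 \<le> r" "r < 2*pi" using l u unfolding r_def by (auto simp: algebra_simps)
  have fr: "f_pa p \<alpha> x = f_pa p \<alpha> r"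
    using f_per[of p \<alpha> r k] unfolding r_def by simp
  show ?thesis
  proof (cases "r \<le> pi")
    case True thus ?thesis using fr r0 by auto
  next
    case False
    have "f_pa p \<alpha> r = f_pa p \<alpha> (r + 2 * of_int (-1) * pi)" by (rule f_per[symmetric])
    also have "r + 2 * of_int (-1) * pi = - (2*pi - r)" by simp
    also have "f_pa p \<alpha> (- (2*pi - r)) = f_pa p \<alpha> (2*pi - r)" by (rule f_sym)
    finally show ?thesis using fr r0 False by (intro bexI[of _ "2*pi - r"]) auto
  qed
qed

lemma f_bdd: "bdd_above (range (f_pa p \<alpha>))"
proof -
  define C where "C = 2 * 2^(p+1) * Zc"
  have "f_pa p \<alpha> x \<le> pi powr \<alpha> + \<bar>C\<bar>" for x
  proof -
    obtain t where t: "t \<in> {0..pi}" "f_pa p \<alpha> x = f_pa p \<alpha> t" using reduce by blast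
    have up: "f_pa p \<alpha> t \<le> \<bar>t\<bar> powr \<alpha> * sinc_fn (t / 2) ^ (p + 1) + C * sin (t/2) ^ (p+1)"
      using f_upper[of t] t unfolding C_def by auto
    have s1: "sinc_fn (t / 2) ^ (p + 1) \<le> 1"
    proof -
      have "sinc_fn (t / 2) ^ (p + 1) \<le> \<bar>sinc_fn (t / 2)\<bar> ^ (p + 1)" by (metis abs_ge_self power_abs)
      also have "\<dots> \<le> 1" using sinc_le1 by (intro power_le_one) auto
      finally show ?thesis .
    qed
    have "\<bar>t\<bar> powr \<alpha> * sinc_fn (t / 2) ^ (p + 1) \<le> \<bar>t\<bar> powr \<alpha> * 1"
      using s1 by (intro mult_left_mono) auto
    also have "\<dots> \<le> pi powr \<alpha>" using t a0 by (auto intro: powr_mono2)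
    finally have A: "\<bar>t\<bar> powr \<alpha> * sinc_fn (t / 2) ^ (p + 1) \<le> pi powr \<alpha>" .
    have "C * sin (t/2) ^ (p+1) \<le> \<bar>C\<bar> * \<bar>sin (t/2)\<bar> ^ (p+1)"
      by (metis abs_ge_self abs_mult power_abs)
    also have "\<dots> \<le> \<bar>C\<bar> * 1" by (intro mult_left_mono power_le_one) auto
    finally show ?thesis using up A t by linarith
  qed
  thus ?thesis by (intro bdd_aboveI2) auto
qed

lemma main_ctx:
  "(\<forall>\<theta>. f_pa p \<alpha> \<theta> = f_pa p \<alpha> (- \<theta>))
    \<and> (\<exists>C. \<forall>\<theta>\<in>{0..pi}.
          \<bar>\<theta>\<bar> powr \<alpha> * sinc_fn (\<theta> / 2) ^ (p + 1) \<le> f_pa p \<alpha> \<theta>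
        \<and> f_pa p \<alpha> \<theta> \<le> \<bar>\<theta>\<bar> powr \<alpha> * sinc_fn (\<theta> / 2) ^ (p + 1)
                          + C * (sin (\<theta> / 2)) ^ (p + 1))
    \<and> f_pa p \<alpha> pi / (SUP \<theta>. f_pa p \<alpha> \<theta>) \<le> f_pa p \<alpha> pi / f_pa p \<alpha> (pi / 2)
    \<and> f_pa p \<alpha> pi / f_pa p \<alpha> (pi / 2) \<le> 2 powr ((2 * \<alpha> + 1 - real p) / 2)"
proof (intro conjI)
  show "\<forall>\<theta>. f_pa p \<alpha> \<theta> = f_pa p \<alpha> (- \<theta>)" using f_sym by simp
  show "\<exists>C. \<forall>\<theta>\<in>{0..pi}.
          \<bar>\<theta>\<bar> powr \<alpha> * sinc_fn (\<theta> / 2) ^ (p + 1) \<le> f_pa p \<alpha> \<theta>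
        \<and> f_pa p \<alpha> \<theta> \<le> \<bar>\<theta>\<bar> powr \<alpha> * sinc_fn (\<theta> / 2) ^ (p + 1)
                          + C * (sin (\<theta> / 2)) ^ (p + 1)" by (rule bounds_ex)
  show "f_pa p \<alpha> pi / f_pa p \<alpha> (pi / 2) \<le> 2 powr ((2 * \<alpha> + 1 - real p) / 2)"
    using ratio(3) by simp
  have le: "f_pa p \<alpha> (pi/2) \<le> (SUP \<theta>. f_pa p \<alpha> \<theta>)"
    by (rule cSUP_upper[OF UNIV_I f_bdd])
  show "f_pa p \<alpha> pi / (SUP \<theta>. f_pa p \<alpha> \<theta>) \<le> f_pa p \<alpha> pi / f_pa p \<alpha> (pi / 2)"
    using le ratio(1,2) by (intro divide_left_mono) auto
qed
end


theorem theorem5p2: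
  fixes \<alpha> :: real and p :: nat
  assumes "1 < \<alpha>" and "\<alpha> < 2" and "2 \<le> p"
  shows "(\<forall>\<theta>. f_pa p \<alpha> \<theta> = f_pa p \<alpha> (- \<theta>))
    \<and> (\<exists>C. \<forall>\<theta>\<in>{0..pi}.
          \<bar>\<theta>\<bar> powr \<alpha> * sinc_fn (\<theta> / 2) ^ (p + 1) \<le> f_pa p \<alpha> \<theta>
        \<and> f_pa p \<alpha> \<theta> \<le> \<bar>\<theta>\<bar> powr \<alpha> * sinc_fn (\<theta> / 2) ^ (p + 1)
                          + C * (sin (\<theta> / 2)) ^ (p + 1))
    \<and> f_pa p \<alpha> pi / (SUP \<theta>. f_pa p \<alpha> \<theta>) \<le> f_pa p \<alpha> pi / f_pa p \<alpha> (pi / 2)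
    \<and> f_pa p \<alpha> pi / f_pa p \<alpha> (pi / 2) \<le> 2 powr ((2 * \<alpha> + 1 - real p) / 2)"
proof -
  have "0 < \<alpha>" using assms by simp
  moreover have "\<alpha> < real p" using assms by simp
  ultimately show ?thesis by (rule main_ctx)
qed

end
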